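(* Let $(E,\mathscr{T},\le)$ be a locally compact $T_2$-preordered Tychonoff space such that $G(\le)=\bigcap_{f\in\mathcal{F}}G_f$, and let $\mathcal{H}\subseteq\mathcal{F}$ with $G(\le)=\bigcap_{h\in\mathcal{H}}G_h$. Let $c:E\to cE$ be the $\mathcal{H}$-compactification. Then the remainder $cE\setminus c(E)$, endowed with the preorder induced from $\le_c$, is a $T_2$-ordered space (in particular $\le_c$ restricted to the remainder is antisymmetric).
   Context: $T_2$-preordered: the graph $G(\le)=\{(x,y):x\le y\}$ is closed in $E\times E$; $T_2$-ordered: additionally antisymmetric. $\mathcal{F}$ is the family of continuous isotone ($x\le y\Rightarrow f(x)\le f(y)$) functions $f:E\to[0,1]$; $G_f=\{(x,y):f(x)\le f(y)\}$. $\mathcal{C}$ is the family of continuous functions $E\to[0,1]$ that are constant outside some compact set. For $\mathcal{H}\subseteq\mathcal{F}$ with $G(\le)=\bigcap_{h\in\mathcal{H}}G_h$, the $\mathcal{H}$-compactification is the map $c:E\to[0,1]^{\mathcal{H}\cup\mathcal{C}}$, $c(x)=(g(x))_{g\in\mathcal{H}\cup\mathcal{C}}$, with $cE$ the closure of $c(E)$ in the product topology, $\mathscr{T}_c$ the induced topology, and $\le_c$ the restriction to $cE$ of the preorder $x\preceq y$ iff $x_h\le y_h$ for all $h\in\mathcal{H}$. *)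

theory Defs
  imports "HOL-Analysis.Analysis"
begin

definition graph_rel :: "'a topology \<Rightarrow> ('a \<Rightarrow> 'a \<Rightarrow> bool) \<Rightarrow> ('a \<times> 'a) set" where
  "graph_rel X le = {(x, y). x \<in> topspace X \<and> y \<in> topspace X \<and> le x y}"

definition preorder_on :: "'a set \<Rightarrow> ('a \<Rightarrow> 'a \<Rightarrow> bool) \<Rightarrow> bool" where
  "preorder_on S le \<longleftrightarrow> (\<forall>x\<in>S. le x x) \<and> (\<forall>x\<in>S. \<forall>y\<in>S. \<forall>z\<in>S. le x y \<longrightarrow> le y z \<longrightarrow> le x z)"

definition T2_preordered :: "'a topology \<Rightarrow> ('a \<Rightarrow> 'a \<Rightarrow> bool) \<Rightarrow> bool" where
  "T2_preordered X le \<longleftrightarrow> preorder_on (topspace X) le \<and> closedin (prod_topology X X) (graph_rel X le)"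

definition T2_ordered :: "'a topology \<Rightarrow> ('a \<Rightarrow> 'a \<Rightarrow> bool) \<Rightarrow> bool" where
  "T2_ordered X le \<longleftrightarrow> T2_preordered X le \<and>
     (\<forall>x\<in>topspace X. \<forall>y\<in>topspace X. le x y \<longrightarrow> le y x \<longrightarrow> x = y)"

definition isotone_fams :: "'a topology \<Rightarrow> ('a \<Rightarrow> 'a \<Rightarrow> bool) \<Rightarrow> ('a \<Rightarrow> real) set" where
  "isotone_fams X le = {f. continuous_map X (top_of_set {0..1}) f \<and>
      (\<forall>x\<in>topspace X. \<forall>y\<in>topspace X. le x y \<longrightarrow> f x \<le> f y)}"

definition const_off_compact :: "'a topology \<Rightarrow> ('a \<Rightarrow> real) set" where
  "const_off_compact X = {f. continuous_map X (top_of_set {0..1}) f \<and>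
      (\<exists>K a. compactin X K \<and> (\<forall>x\<in>topspace X - K. f x = a))}"

definition Gf :: "'a topology \<Rightarrow> ('a \<Rightarrow> real) \<Rightarrow> ('a \<times> 'a) set" where
  "Gf X f = {(x, y). x \<in> topspace X \<and> y \<in> topspace X \<and> f x \<le> f y}"

definition cube :: "'a topology \<Rightarrow> ('a \<Rightarrow> real) set \<Rightarrow> (('a \<Rightarrow> real) \<Rightarrow> real) topology" where
  "cube X H = product_topology (\<lambda>g. top_of_set {0..1}) (H \<union> const_off_compact X)"

definition cmap :: "'a topology \<Rightarrow> ('a \<Rightarrow> real) set \<Rightarrow> 'a \<Rightarrow> (('a \<Rightarrow> real) \<Rightarrow> real)" where
  "cmap X H x = (\<lambda>g\<in>H \<union> const_off_compact X. g x)"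

definition cE :: "'a topology \<Rightarrow> ('a \<Rightarrow> real) set \<Rightarrow> (('a \<Rightarrow> real) \<Rightarrow> real) set" where
  "cE X H = (cube X H) closure_of (cmap X H ` topspace X)"

definition le_c :: "('a \<Rightarrow> real) set \<Rightarrow> (('a \<Rightarrow> real) \<Rightarrow> real) \<Rightarrow> (('a \<Rightarrow> real) \<Rightarrow> real) \<Rightarrow> bool" where
  "le_c H y z \<longleftrightarrow> (\<forall>h\<in>H. y h \<le> z h)"

end

theory Submission
  imports Defs
begin

lemma proj_real:
  assumes "g \<in> H \<union> const_off_compact X"
  shows "continuous_map (cube X H) euclideanreal (\<lambda>y. y g)"
proof -
  have "continuous_map (cube X H) (top_of_set {0..1}) (\<lambda>y. y g)"
    unfolding cube_def using assms by (rule continuous_map_product_projection)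
  then show ?thesis by (simp add: continuous_map_in_subtopology)
qed

lemma cont_c:
  assumes "H \<subseteq> isotone_fams X le"
  shows "continuous_map X (cube X H) (cmap X H)"
  unfolding cube_def continuous_map_componentwise
proof (intro conjI ballI)
  show "cmap X H ` topspace X \<subseteq> extensional (H \<union> const_off_compact X)"
    by (auto simp: cmap_def)
next
  fix k assume k: "k \<in> H \<union> const_off_compact X"
  then have "continuous_map X (top_of_set {0..1}) k"
    using assms by (auto simp: isotone_fams_def const_off_compact_def)
  then show "continuous_map X (top_of_set {0..1}) (\<lambda>x. cmap X H x k)"
    using k by (simp add: cmap_def)
qed

lemma cube_Hausdorff: "Hausdorff_space (cube X H)"
  unfolding cube_def Hausdorff_space_product_topology
  by (simp add: Hausdorff_space_subtopology)

lemma remainder_const: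
  assumes Hs: "H \<subseteq> isotone_fams X le"
    and p: "p \<in> cE X H - cmap X H ` topspace X"
    and K: "compactin X K" and a: "\<forall>x\<in>topspace X - K. g x = a"
    and g: "g \<in> const_off_compact X"
  shows "p g = a"
proof -
  let ?T = "cube X H" and ?c = "cmap X H"
  have cc: "closedin ?T (?c ` K)"
    by (rule compactin_imp_closedin[OF cube_Hausdorff image_compactin[OF K cont_c[OF Hs]]])
  have KE: "K \<subseteq> topspace X" using K compactin_subset_topspace by auto
  have split: "?c ` topspace X = ?c ` K \<union> ?c ` (topspace X - K)" using KE by auto
  have "p \<in> ?T closure_of (?c ` K) \<union> ?T closure_of (?c ` (topspace X - K))"
    using p unfolding cE_def split closure_of_Un by blast
  moreover have "p \<notin> ?T closure_of (?c ` K)"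
    using p closure_of_closedin[OF cc] KE by auto
  ultimately have p2: "p \<in> ?T closure_of (?c ` (topspace X - K))" by blast
  have cl: "closedin ?T {y \<in> topspace ?T. (\<lambda>y. y g) y \<in> {a}}"
    by (rule closedin_continuous_map_preimage[OF proj_real]) (use g in auto)
  have "?c ` (topspace X - K) \<subseteq> {y \<in> topspace ?T. (\<lambda>y. y g) y \<in> {a}}"
  proof
    fix y assume "y \<in> ?c ` (topspace X - K)"
    then obtain x where x: "x \<in> topspace X - K" "y = ?c x" by auto
    have "y \<in> topspace ?T" using x cont_c[OF Hs] by (auto simp: continuous_map_def)
    moreover have "y g = a" using x a g by (auto simp: cmap_def)
    ultimately show "y \<in> {y \<in> topspace ?T. (\<lambda>y. y g) y \<in> {a}}" by simp
  qed
  from closure_of_minimal[OF this cl] p2 show ?thesis by auto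
qed

theorem mainTheorem11:
  fixes X :: "'a topology" and le :: "'a \<Rightarrow> 'a \<Rightarrow> bool" and H :: "('a \<Rightarrow> real) set"
  assumes "locally_compact_space X"
    and "completely_regular_space X" and "Hausdorff_space X"
    and "T2_preordered X le"
    and "graph_rel X le = (topspace X \<times> topspace X) \<inter> (\<Inter>f\<in>isotone_fams X le. Gf X f)"
    and Hs: "H \<subseteq> isotone_fams X le"
    and "graph_rel X le = (topspace X \<times> topspace X) \<inter> (\<Inter>h\<in>H. Gf X h)"
  shows "T2_ordered (subtopology (cube X H) (cE X H - cmap X H ` topspace X)) (le_c H)"
proof -
  let ?T = "cube X H" and ?R = "cE X H - cmap X H ` topspace X"
  let ?P = "subtopology ?T ?R"
  have RT: "?R \<subseteq> topspace ?T" unfolding cE_def using closure_of_subset_topspace by (metis Diff_subset order_trans)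
  have tsP: "topspace ?P = ?R" using RT by (rule topspace_subtopology_subset)
  have pre: "preorder_on (topspace ?P) (le_c H)"
    unfolding preorder_on_def le_c_def by (meson order_refl order_trans)
  have closed: "closedin (prod_topology ?P ?P) (graph_rel ?P (le_c H))"
  proof (cases "H = {}")
    case True
    then have "graph_rel ?P (le_c H) = topspace (prod_topology ?P ?P)"
      by (auto simp: graph_rel_def le_c_def)
    then show ?thesis by (metis closedin_topspace)
  next
    case False
    have eq: "graph_rel ?P (le_c H) = (\<Inter>h\<in>H. {z \<in> topspace (prod_topology ?P ?P).
                 (\<lambda>z. snd z h - fst z h) z \<in> {0..}})"
      using False by (auto simp: graph_rel_def le_c_def)
    have "closedin (prod_topology ?P ?P) {z \<in> topspace (prod_topology ?P ?P).
                 (\<lambda>z. snd z h - fst z h) z \<in> {0..}}" if h: "h \<in> H" for h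
    proof (rule closedin_continuous_map_preimage)
      have pr: "continuous_map ?P euclideanreal (\<lambda>y. y h)"
        by (rule continuous_map_from_subtopology[OF proj_real]) (use h in auto)
      show "continuous_map (prod_topology ?P ?P) euclideanreal (\<lambda>z. snd z h - fst z h)"
        by (intro continuous_map_diff continuous_map_compose[OF continuous_map_snd pr, unfolded o_def]
              continuous_map_compose[OF continuous_map_fst pr, unfolded o_def])
      show "closedin euclideanreal {0::real..}" by (simp add: closed_closedin[symmetric])
    qed
    then show ?thesis unfolding eq using False by (intro closedin_Inter) auto
  qed
  have anti: "\<forall>x\<in>topspace ?P. \<forall>y\<in>topspace ?P. le_c H x y \<longrightarrow> le_c H y x \<longrightarrow> x = y"
  proof (intro ballI impI)
    fix p q assume p: "p \<in> topspace ?P" and q: "q \<in> topspace ?P"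
      and pq: "le_c H p q" and qp: "le_c H q p"
    have pT: "p \<in> topspace ?T" and qT: "q \<in> topspace ?T" using p q tsP RT by auto
    show "p = q"
    proof
      fix g
      show "p g = q g"
      proof (cases "g \<in> H")
        case True then show ?thesis using pq qp unfolding le_c_def by (meson order_antisym)
      next
        case gH: False
        show ?thesis
        proof (cases "g \<in> const_off_compact X")
          case True
          then obtain K a where K: "compactin X K" "\<forall>x\<in>topspace X - K. g x = a"
            by (auto simp: const_off_compact_def)
          show ?thesis
            using remainder_const[OF Hs _ K True, of p] remainder_const[OF Hs _ K True, of q]
              p q tsP by auto
        next
          case False
          then show ?thesis using pT qT gH by (auto simp: cube_def PiE_def extensional_def)
        qed
      qed
    qed
  qed
  show ?thesis unfolding T2_ordered_def T2_preordered_def using pre closed anti by blast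
qed

end
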